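(* For $\tau=\tau_F$ one has $\widehat\tau_{\mathbf 0}=1$, and $\widehat\tau_{\mathbf n}=0$ for every $\mathbf n\in\mathbb N_0^d\setminus\{\mathbf 0\}$ that lies in none of the blocks $B_{2m_s}$, $s\in\mathbb N$. The same holds for the coefficients $\widehat{\tau^{\boldsymbol\pi}}_{\mathbf n}$ of $\tau^{\boldsymbol\pi}=\tau_{F^{\boldsymbol\pi}}$ for every sequence $\boldsymbol\pi=(\boldsymbol\pi_s)_{s\in\mathbb N}$ of permutations $\boldsymbol\pi_s$ of $\{0,\dots,2^{m_s}-1\}^d$.
   Context: Fix $d\ge2$. $\mathbb G$ is the dyadic group: sequences $g=(g_k)_{k\ge0}$, $g_k\in\{0,1\}$, coordinatewise addition mod 2, product topology; $\mathbb G^d$ its $d$-th power. For $n\in\mathbb N_0$, $n=\sum_kn_k2^k$, $n_k\in\{0,1\}$. Dyadic interval of rank $k$: $\Delta^{(k)}_m=\{g: g_t=m_{k-1-t},\ 0\le t<k\}$; dyadic cube $\Delta^{(k)}_{\mathbf m}=\prod_l\Delta^{(k)}_{m^l}$. Vector order coordinatewise, $\mathbf 0,\mathbf 1$ constant vectors; $B_k=\{\mathbf n\in\mathbb N_0^d: 2^k\mathbf 1\le\mathbf n<2^{k+1}\mathbf 1\}$. Walsh functions $W_n(g)=\prod_k(-1)^{g_kn_k}$, $W_{\mathbf n}(\mathbf g)=\prod_lW_{n^l}(g^l)$; $W^{(k)}_{\mathbf n\mathbf m}$ is the constant value of $W_{\mathbf n}$ on $\Delta^{(k)}_{\mathbf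 m}$ ($\mathbf n,\mathbf m<2^k\mathbf 1$); $R_{k\mathbf 1}:=W_{2^k\mathbf 1}$. Quasimeasure: $\tau$ on dyadic cubes with $\tau(\Delta^{(k)}_{\mathbf m})=\sum_{\boldsymbol\sigma\in\{0,1\}^d}\tau(\Delta^{(k+1)}_{2\mathbf m+\boldsymbol\sigma})$; $\widehat\tau_{\mathbf n}=\sum_{\mathbf m<2^k\mathbf 1}W^{(k)}_{\mathbf n\mathbf m}\tau(\Delta^{(k)}_{\mathbf m})$ for $\mathbf n<2^k\mathbf 1$. For nonempty closed $E$, $\tau_E$ is the unique nonnegative quasimeasure with $\tau_E(\mathbb G^d)=1$, $\tau_E(\Delta)=0$ iff $\Delta\cap E=\emptyset$, splitting the value of a cube meeting $E$ equally among its $2^d$ children that meet $E$. Let $m_1=0$, $m_{s+1}=2(2m_s+1)$. $F_s=\bigcup_{\mathbf m,\mathbf m'<2^{m_s}\mathbf 1}\{\mathbf g\in\Delta^{(2m_s)}_{2^{m_s}\mathbf m+\mathbf m'}: R_{2m_s\mathbf 1}(\mathbf g)=W^{(m_s)}_{\mathbf m\mathbf m'}\}$, $F=\bigcap_sF_s$; $F^{\boldsymbol\pi}_s$ is defined the same way with $W^{(m_s)}_{\boldsymbol\pi_s(\mathbf m)\,\mathbf m'}$ in place of $W^{(m_s)}_{\mathbf m\mathbf m'}$, and $F^{\boldsymbol\pi}=\bigcap_sF^{\boldsymbol\pi}_s$. *)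

theory Defs
  imports Complex_Main
begin

text \<open>Points of the dyadic group G are maps nat => bool (g_k = 1 iff g k);
  points of G^d are maps 'd => nat => bool, where 'd is a finite index type
  with CARD('d) = d.\<close>

definition dint :: "nat \<Rightarrow> nat \<Rightarrow> (nat \<Rightarrow> bool) set" where
  "dint k m = {g. \<forall>t<k. g t = bit m (k - 1 - t)}"

definition dcube :: "nat \<Rightarrow> ('d \<Rightarrow> nat) \<Rightarrow> ('d \<Rightarrow> nat \<Rightarrow> bool) set" where
  "dcube k m = {g. \<forall>l. g l \<in> dint k (m l)}"

definition dbox :: "nat \<Rightarrow> ('d \<Rightarrow> nat) set" where
  "dbox k = {m. \<forall>l. m l < 2 ^ k}"

definition block :: "nat \<Rightarrow> ('d \<Rightarrow> nat) set" where
  "block k = {n. \<forall>l. 2 ^ k \<le> n l \<and> n l < 2 ^ (k + 1)}"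

text \<open>Walsh function W_n(g) = prod_k (-1)^(g_k n_k).\<close>
definition walsh :: "nat \<Rightarrow> (nat \<Rightarrow> bool) \<Rightarrow> real" where
  "walsh n g = (-1) ^ card {t. bit n t \<and> g t}"

definition walshd :: "('d::finite \<Rightarrow> nat) \<Rightarrow> ('d \<Rightarrow> nat \<Rightarrow> bool) \<Rightarrow> real" where
  "walshd n g = (\<Prod>l\<in>UNIV. walsh (n l) (g l))"

text \<open>The point of the dyadic interval of rank k and index m with all
  coordinates t >= k equal to 0 (W_n is constant on the interval when n < 2^k).\<close>
definition dpt :: "nat \<Rightarrow> nat \<Rightarrow> (nat \<Rightarrow> bool)" where
  "dpt k m = (\<lambda>t. t < k \<and> bit m (k - 1 - t))"

definition Wk :: "nat \<Rightarrow> ('d::finite \<Rightarrow> nat) \<Rightarrow> ('d \<Rightarrow> nat) \<Rightarrow> real" where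
  "Wk k n m = walshd n (\<lambda>l. dpt k (m l))"

definition Rk :: "nat \<Rightarrow> ('d::finite \<Rightarrow> nat \<Rightarrow> bool) \<Rightarrow> real" where
  "Rk k g = walshd (\<lambda>l. 2 ^ k) g"

text \<open>Fourier coefficient of a quasimeasure tau (given as tau k m = tau(Delta^(k)_m)),
  computed at the least rank k with n < 2^k 1.\<close>
definition fcoef :: "(nat \<Rightarrow> ('d::finite \<Rightarrow> nat) \<Rightarrow> real) \<Rightarrow> ('d \<Rightarrow> nat) \<Rightarrow> real" where
  "fcoef tau n = (let k = (LEAST k. \<forall>l. n l < 2 ^ k) in
      (\<Sum>m\<in>dbox k. Wk k n m * tau k m))"

fun tauE :: "('d \<Rightarrow> nat \<Rightarrow> bool) set \<Rightarrow> nat \<Rightarrow> ('d \<Rightarrow> nat) \<Rightarrow> real" where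
  "tauE E 0 m = (if E = {} then 0 else 1)"
| "tauE E (Suc k) m =
     (if dcube (Suc k) m \<inter> E = {} then 0
      else tauE E k (\<lambda>l. m l div 2) /
        real (card {\<sigma>::'d \<Rightarrow> bool.
                dcube (Suc k) (\<lambda>l. 2 * (m l div 2) + of_bool (\<sigma> l)) \<inter> E \<noteq> {}}))"

text \<open>m_1 = 0, m_{s+1} = 2(2 m_s + 1)  (index s >= 1; the value at 0 is unused).\<close>
fun mseq :: "nat \<Rightarrow> nat" where
  "mseq 0 = 0"
| "mseq (Suc 0) = 0"
| "mseq (Suc (Suc s)) = 2 * (2 * mseq (Suc s) + 1)"

definition Fpi_s :: "(('d::finite \<Rightarrow> nat) \<Rightarrow> ('d \<Rightarrow> nat)) \<Rightarrow> nat \<Rightarrow> ('d \<Rightarrow> nat \<Rightarrow> bool) set" where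
  "Fpi_s p s = (\<Union>m\<in>dbox (mseq s). \<Union>m'\<in>dbox (mseq s).
      {g \<in> dcube (2 * mseq s) (\<lambda>l. 2 ^ mseq s * m l + m' l).
         Rk (2 * mseq s) g = Wk (mseq s) (p m) m'})"

definition F_s :: "nat \<Rightarrow> ('d::finite \<Rightarrow> nat \<Rightarrow> bool) set" where
  "F_s s = (\<Union>m\<in>dbox (mseq s). \<Union>m'\<in>dbox (mseq s).
      {g \<in> dcube (2 * mseq s) (\<lambda>l. 2 ^ mseq s * m l + m' l).
         Rk (2 * mseq s) g = Wk (mseq s) m m'})"

definition Fset :: "('d::finite \<Rightarrow> nat \<Rightarrow> bool) set" where
  "Fset = (\<Inter>s\<in>{1..}. F_s s)"

definition Fpi :: "(nat \<Rightarrow> ('d::finite \<Rightarrow> nat) \<Rightarrow> ('d \<Rightarrow> nat)) \<Rightarrow> ('d \<Rightarrow> nat \<Rightarrow> bool) set" where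
  "Fpi \<pi> = (\<Inter>s\<in>{1..}. Fpi_s (\<pi> s) s)"

end

theory Submission
  imports Defs
begin



definition flip :: "'d \<Rightarrow> nat \<Rightarrow> ('d \<Rightarrow> nat \<Rightarrow> bool) \<Rightarrow> ('d \<Rightarrow> nat \<Rightarrow> bool)" where
  "flip l t g = g(l := (g l)(t := \<not> g l t))"

definition agree :: "nat \<Rightarrow> ('d \<Rightarrow> nat \<Rightarrow> bool) \<Rightarrow> ('d \<Rightarrow> nat \<Rightarrow> bool) \<Rightarrow> bool" where
  "agree K g h \<longleftrightarrow> (\<forall>l t. t < K \<longrightarrow> g l t = h l t)"

lemma agree_sym: "agree K g h \<Longrightarrow> agree K h g" by (auto simp: agree_def)
lemma agree_trans: "agree K g h \<Longrightarrow> agree K h i \<Longrightarrow> agree K g i" by (auto simp: agree_def)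
lemma agree_mono: "agree K g h \<Longrightarrow> K' \<le> K \<Longrightarrow> agree K' g h" by (auto simp: agree_def)
lemma agree_flip: "j \<ge> K \<Longrightarrow> agree K (flip l j g) g" by (auto simp: agree_def flip_def)

lemma dcube_iff: "g \<in> dcube k m \<longleftrightarrow> (\<forall>l t. t < k \<longrightarrow> g l t = bit (m l) (k - 1 - t))"
  by (auto simp: dcube_def dint_def)

lemma dcube_agree: "g \<in> dcube k m \<Longrightarrow> agree k g h \<Longrightarrow> h \<in> dcube k m"
  by (auto simp: dcube_iff agree_def)

lemma dcube_agree2: "g \<in> dcube k m \<Longrightarrow> h \<in> dcube k m \<Longrightarrow> agree k g h"
  by (auto simp: dcube_iff agree_def)

lemma finite_dbox: "finite (dbox k :: ('d::finite \<Rightarrow> nat) set)"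
proof -
  have "(dbox k :: ('d \<Rightarrow> nat) set) = {f. \<forall>x. (x \<in> UNIV \<longrightarrow> f x \<in> {..<(2::nat)^k}) \<and> (x \<notin> UNIV \<longrightarrow> f x = 0)}"
    by (auto simp: dbox_def)
  then show ?thesis using finite_set_of_finite_funs[of "UNIV::'d set" "{..<(2::nat)^k}" 0]
    by simp
qed

lemma dcube_exists: "\<exists>a\<in>dbox k. g \<in> dcube k a"
proof (induction k)
  case 0
  show ?case by (rule bexI[of _ "\<lambda>_. 0"]) (auto simp: dbox_def dcube_iff)
next
  case (Suc k)
  then obtain a where a: "a \<in> dbox k" "g \<in> dcube k a" by blast
  let ?b = "\<lambda>l. 2 * a l + of_bool (g l k)"
  have "?b \<in> dbox (Suc k)"
  proof -
    { fix l have "a l < 2^k" using a(1) by (auto simp: dbox_def)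
      then have "2 * a l + of_bool (g l k) < 2^Suc k" by (cases "g l k") auto }
    then show ?thesis by (auto simp: dbox_def)
  qed
  moreover have "g \<in> dcube (Suc k) ?b"
    unfolding dcube_iff
  proof (intro allI impI)
    fix l t assume t: "t < Suc k"
    show "g l t = bit (?b l) (Suc k - 1 - t)"
    proof (cases "t = k")
      case True then show ?thesis by (simp add: bit_0)
    next
      case False
      then have tk: "t < k" using t by simp
      then have e: "Suc k - 1 - t = Suc (k - 1 - t)" by simp
      have "g l t = bit (a l) (k - 1 - t)" using a(2) tk by (simp add: dcube_iff)
      then show ?thesis unfolding e by (simp add: bit_Suc)
    qed
  qed
  ultimately show ?case by blast
qed

lemma bit_big: "(a::nat) < 2^k \<Longrightarrow> k \<le> i \<Longrightarrow> \<not> bit a i"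
proof -
  assume "a < 2^k" "k \<le> i"
  then have "a < 2^i" by (meson order_less_le_trans one_le_numeral power_increasing)
  then show ?thesis by (simp add: bit_iff_odd)
qed

lemma dcube_unique:
  assumes "a \<in> dbox k" "b \<in> dbox k" "g \<in> dcube k a" "g \<in> dcube k b"
  shows "a = b"
proof
  fix l
  show "a l = b l"
  proof (rule bit_eqI)
    fix i
    show "bit (a l) i = bit (b l) i"
    proof (cases "i < k")
      case True
      then have "k - 1 - (k - 1 - i) = i" by simp
      moreover have "k - 1 - i < k" using True by simp
      ultimately show ?thesis using assms(3,4) unfolding dcube_iff
        by metis
    next
      case False
      have "a l < 2^k" "b l < 2^k" using assms(1,2) by (auto simp: dbox_def)
      then have "\<not> bit (a l) i" "\<not> bit (b l) i" using False bit_big by (metis not_less)+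
      then show ?thesis by simp
    qed
  qed
qed

lemma walsh_pm: "\<bar>walsh n g\<bar> = 1" by (simp add: walsh_def)

lemma walshd_pm: "\<bar>walshd n g\<bar> = 1" by (simp add: walshd_def abs_prod walsh_pm)

lemma pm_neq: "\<bar>x::real\<bar> = 1 \<Longrightarrow> \<bar>y\<bar> = 1 \<Longrightarrow> x \<noteq> y \<Longrightarrow> x = - y"
  by (auto simp: abs_if split: if_splits)

lemma finite_bits: "finite {t. bit (n::nat) t}"
proof (rule finite_subset[of _ "{..<n}"])
  show "{t. bit n t} \<subseteq> {..<n}"
  proof
    fix t assume "t \<in> {t. bit n t}"
    then have "odd (n div 2^t)" by (simp add: bit_iff_odd)
    then have "n div 2^t \<noteq> 0" by (metis odd_pos less_irrefl)
    then have "2^t \<le> n" by (simp add: div_eq_0_iff not_less)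
    moreover have "t < 2^t" by simp
    ultimately have "t < n" by linarith
    then show "t \<in> {..<n}" by simp
  qed
qed simp

lemma walsh_flip: "walsh n (h(t := \<not> h t)) = (if bit n t then -1 else 1) * walsh n h"
proof -
  let ?A = "{t'. bit n t' \<and> h t'}"
  let ?B = "{t'. bit n t' \<and> (h(t := \<not> h t)) t'}"
  have fA: "finite ?A" by (rule finite_subset[OF _ finite_bits[of n]]) auto
  show ?thesis
  proof (cases "bit n t")
    case False
    then have "?A = ?B" by auto
    then show ?thesis using False by (simp add: walsh_def)
  next
    case True
    show ?thesis
    proof (cases "h t")
      case ht: True
      then have "?B = ?A - {t}" by auto
      moreover have "t \<in> ?A" using True ht by simp
      ultimately have "card ?A = Suc (card ?B)" using fA
        by (metis card_Suc_Diff1)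
      then show ?thesis using True by (simp add: walsh_def)
    next
      case ht: False
      then have "?B = insert t ?A" using True by auto
      moreover have "t \<notin> ?A" using ht by simp
      ultimately have "card ?B = Suc (card ?A)" using fA by simp
      then show ?thesis using True by (simp add: walsh_def)
    qed
  qed
qed

lemma walshd_flip: "walshd n (flip l t G) = (if bit (n l) t then -1 else 1) * walshd n G"
proof -
  have fl: "flip l t G l = (G l)(t := \<not> G l t)" by (simp add: flip_def)
  have "walshd n (flip l t G) = walsh (n l) (flip l t G l) * (\<Prod>l'\<in>UNIV - {l}. walsh (n l') (flip l t G l'))"
    unfolding walshd_def by (rule prod.remove) auto
  also have "(\<Prod>l'\<in>UNIV - {l}. walsh (n l') (flip l t G l')) = (\<Prod>l'\<in>UNIV - {l}. walsh (n l') (G l'))"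
    by (rule prod.cong) (auto simp: flip_def)
  also have "walsh (n l) (flip l t G l) = (if bit (n l) t then -1 else 1) * walsh (n l) (G l)"
    unfolding fl by (rule walsh_flip)
  finally have 1: "walshd n (flip l t G) = (if bit (n l) t then -1 else 1) * walsh (n l) (G l) * (\<Prod>l'\<in>UNIV - {l}. walsh (n l') (G l'))" .
  have "walshd n G = walsh (n l) (G l) * (\<Prod>l'\<in>UNIV - {l}. walsh (n l') (G l'))"
    unfolding walshd_def by (rule prod.remove) auto
  then show ?thesis using 1 by simp
qed

lemma Rk_flip: "Rk k (flip l k g) = - Rk k g"
  unfolding Rk_def by (simp add: walshd_flip bit_exp_iff)



lemma Fpi_s_iff: "g \<in> Fpi_s p s \<longleftrightarrow> (\<exists>m\<in>dbox (mseq s). \<exists>m'\<in>dbox (mseq s).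
   g \<in> dcube (2 * mseq s) (\<lambda>l. 2 ^ mseq s * m l + m' l) \<and> Rk (2 * mseq s) g = Wk (mseq s) (p m) m')"
  unfolding Fpi_s_def by blast

lemma Rk_agree: "agree (Suc k) g h \<Longrightarrow> Rk k g = Rk k h"
proof -
  assume a: "agree (Suc k) g h"
  have "\<And>l. walsh (2^k) (g l) = walsh (2^k) (h l)"
  proof -
    fix l
    have "{t. bit ((2::nat)^k) t \<and> g l t} = {t. bit ((2::nat)^k) t \<and> h l t}"
      using a by (auto simp: bit_exp_iff agree_def)
    then show "walsh (2^k) (g l) = walsh (2^k) (h l)" by (simp add: walsh_def)
  qed
  then show ?thesis by (simp add: Rk_def walshd_def)
qed

lemma C1: "agree (Suc (2 * mseq s)) g h \<Longrightarrow> g \<in> Fpi_s p s \<Longrightarrow> h \<in> Fpi_s p s"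
proof -
  assume a: "agree (Suc (2 * mseq s)) g h" and g: "g \<in> Fpi_s p s"
  have a2: "agree (2 * mseq s) g h" using a agree_mono by fastforce
  have "Rk (2 * mseq s) g = Rk (2 * mseq s) h" using a by (rule Rk_agree)
  then show ?thesis using g a2 dcube_agree unfolding Fpi_s_iff by fastforce
qed

lemma idx_dbox:
  assumes "m \<in> dbox k" "m' \<in> dbox k"
  shows "(\<lambda>l. 2 ^ k * m l + m' l) \<in> dbox (2 * k)"
proof -
  { fix l
    have "m l < 2^k" "m' l < 2^k" using assms by (auto simp: dbox_def)
    then have "2 ^ k * m l + m' l < 2^k * (m l + 1)" by simp
    also have "\<dots> \<le> 2^k * 2^k" using \<open>m l < 2^k\<close> by (intro mult_le_mono2) simp
    also have "(2::nat)^k * 2^k = 2 ^ (2 * k)" by (simp add: mult_2 power_add)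
    finally have "2 ^ k * m l + m' l < 2 ^ (2 * k)" . }
  then show ?thesis by (simp add: dbox_def)
qed

lemma C2: "g \<in> Fpi_s p s \<longleftrightarrow> flip l (2 * mseq s) g \<notin> Fpi_s p s"
proof -
  let ?k = "mseq s" let ?P = "2 * mseq s"
  have ag': "agree ?P (flip l ?P g) g" by (rule agree_flip) simp
  have ag: "agree ?P g (flip l ?P g)" using ag' by (rule agree_sym)
  have R: "Rk ?P (flip l ?P g) = - Rk ?P g" by (rule Rk_flip)
  show ?thesis
  proof
    assume "g \<in> Fpi_s p s"
    then obtain m m' where mm: "m \<in> dbox ?k" "m' \<in> dbox ?k"
      "g \<in> dcube ?P (\<lambda>l. 2 ^ ?k * m l + m' l)" "Rk ?P g = Wk ?k (p m) m'"
      unfolding Fpi_s_iff by blast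
    show "flip l ?P g \<notin> Fpi_s p s"
    proof
      assume "flip l ?P g \<in> Fpi_s p s"
      then obtain m2 m2' where mm2: "m2 \<in> dbox ?k" "m2' \<in> dbox ?k"
        "flip l ?P g \<in> dcube ?P (\<lambda>l. 2 ^ ?k * m2 l + m2' l)" "Rk ?P (flip l ?P g) = Wk ?k (p m2) m2'"
        unfolding Fpi_s_iff by blast
      have "g \<in> dcube ?P (\<lambda>l. 2 ^ ?k * m2 l + m2' l)" using mm2(3) ag' dcube_agree by blast
      then have e: "(\<lambda>l. 2 ^ ?k * m l + m' l) = (\<lambda>l. 2 ^ ?k * m2 l + m2' l)"
        by (rule dcube_unique[OF idx_dbox[OF mm(1,2)] idx_dbox[OF mm2(1,2)] mm(3)])
      have "m = m2 \<and> m' = m2'"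
      proof (intro conjI ext)
        fix x
        have "2 ^ ?k * m x + m' x = 2 ^ ?k * m2 x + m2' x" using e by (rule fun_cong)
        moreover have "m' x < 2 ^ ?k" "m2' x < 2 ^ ?k" using mm(2) mm2(2) by (auto simp: dbox_def)
        moreover have "m x = (2 ^ ?k * m x + m' x) div 2 ^ ?k" "m2 x = (2 ^ ?k * m2 x + m2' x) div 2 ^ ?k"
          using \<open>m' x < 2 ^ ?k\<close> \<open>m2' x < 2 ^ ?k\<close> by simp_all
        moreover have "m' x = (2 ^ ?k * m x + m' x) mod 2 ^ ?k" "m2' x = (2 ^ ?k * m2 x + m2' x) mod 2 ^ ?k"
          using \<open>m' x < 2 ^ ?k\<close> \<open>m2' x < 2 ^ ?k\<close> by simp_all
        ultimately show "m x = m2 x" "m' x = m2' x" by metis+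
      qed
      then have "Rk ?P g = - Rk ?P g" using mm mm2 R by simp
      then have "Rk ?P g = 0" by simp
      moreover have "\<bar>Rk ?P g\<bar> = 1" by (simp add: Rk_def walshd_pm)
      ultimately show False by simp
    qed
  next
    assume nf: "flip l ?P g \<notin> Fpi_s p s"
    obtain a where a: "a \<in> dbox ?P" "g \<in> dcube ?P a" using dcube_exists by blast
    define m where "m = (\<lambda>x. a x div 2 ^ ?k)"
    define m' where "m' = (\<lambda>x. a x mod 2 ^ ?k)"
    have am: "a = (\<lambda>l. 2 ^ ?k * m l + m' l)" by (simp add: m_def m'_def)
    have m: "m \<in> dbox ?k"
    proof -
      { fix x have "(2::nat)^?k * 2^?k = 2 ^ ?P" by (simp add: mult_2 power_add)
        then have "a x < 2^?k * 2^?k" using a(1) by (simp add: dbox_def)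
        then have "m x < 2^?k" by (simp add: m_def less_mult_imp_div_less) }
      then show ?thesis by (simp add: dbox_def)
    qed
    have m': "m' \<in> dbox ?k" by (simp add: dbox_def m'_def)
    have "flip l ?P g \<in> dcube ?P a" using a(2) ag dcube_agree by blast
    then have fa: "flip l ?P g \<in> dcube ?P (\<lambda>l. 2 ^ ?k * m l + m' l)" using am by simp
    have "Rk ?P (flip l ?P g) \<noteq> Wk ?k (p m) m'"
    proof
      assume "Rk ?P (flip l ?P g) = Wk ?k (p m) m'"
      then have "flip l ?P g \<in> Fpi_s p s" using fa m m' unfolding Fpi_s_iff by blast
      then show False using nf by simp
    qed
    then have "Rk ?P g \<noteq> - Wk ?k (p m) m'" using R by simp
    moreover have "\<bar>Rk ?P g\<bar> = 1" "\<bar>- Wk ?k (p m) m'\<bar> = 1" by (simp_all add: Rk_def Wk_def walshd_pm)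
    ultimately have "Rk ?P g = - (- Wk ?k (p m) m')" using pm_neq by blast
    then have "Rk ?P g = Wk ?k (p m) m'" by simp
    moreover have "g \<in> dcube ?P (\<lambda>l. 2 ^ ?k * m l + m' l)" using a(2) am by simp
    ultimately show "g \<in> Fpi_s p s" using m m' unfolding Fpi_s_iff by blast
  qed
qed

lemma mseq_step: "1 \<le> s \<Longrightarrow> mseq s < mseq (Suc s)"
  by (cases s) auto

lemma mseq_mono: "1 \<le> s \<Longrightarrow> s < s' \<Longrightarrow> mseq s < mseq s'"
proof (induction s')
  case 0 then show ?case by simp
next
  case (Suc s')
  show ?case
  proof (cases "s = s'")
    case True then show ?thesis using mseq_step Suc by simp
  next
    case False
    then have "s < s'" using Suc by simp
    then have "mseq s < mseq s'" using Suc by simp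
    also have "mseq s' < mseq (Suc s')" using mseq_step Suc \<open>s < s'\<close> by simp
    finally show ?thesis .
  qed
qed

lemma mseq_inj: "1 \<le> s \<Longrightarrow> 1 \<le> s' \<Longrightarrow> mseq s = mseq s' \<Longrightarrow> s = s'"
proof (rule ccontr)
  assume "1 \<le> s" "1 \<le> s'" "mseq s = mseq s'" "s \<noteq> s'"
  then show False using mseq_mono[of s s'] mseq_mono[of s' s] by (cases "s < s'") auto
qed

primrec extseq :: "(nat \<Rightarrow> ('d::finite \<Rightarrow> nat) \<Rightarrow> ('d \<Rightarrow> nat)) \<Rightarrow> nat \<Rightarrow> 'd \<Rightarrow> ('d \<Rightarrow> nat \<Rightarrow> bool) \<Rightarrow> nat \<Rightarrow> ('d \<Rightarrow> nat \<Rightarrow> bool)" where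
  "extseq \<pi> K l0 h 0 = h"
| "extseq \<pi> K l0 h (Suc j) = (if K \<le> j \<and> (\<exists>s\<ge>1. j = 2 * mseq s \<and> extseq \<pi> K l0 h j \<notin> Fpi_s (\<pi> s) s)
      then flip l0 j (extseq \<pi> K l0 h j) else extseq \<pi> K l0 h j)"

lemma extseq_step: "agree j (extseq \<pi> K l0 h (Suc j)) (extseq \<pi> K l0 h j)"
  by (auto simp: agree_def flip_def)

lemma extseq_mono: "i \<le> j \<Longrightarrow> agree i (extseq \<pi> K l0 h j) (extseq \<pi> K l0 h i)"
proof (induction j)
  case 0 then show ?case by (simp add: agree_def)
next
  case (Suc j)
  show ?case
  proof (cases "i = Suc j")
    case True then show ?thesis by (simp add: agree_def)
  next
    case False
    then have "i \<le> j" using Suc by simp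
    then have "agree i (extseq \<pi> K l0 h j) (extseq \<pi> K l0 h i)" using Suc by simp
    moreover have "agree i (extseq \<pi> K l0 h (Suc j)) (extseq \<pi> K l0 h j)"
      using extseq_step agree_mono \<open>i \<le> j\<close> by blast
    ultimately show ?thesis using agree_trans by blast
  qed
qed

lemma extseq_h: "agree K (extseq \<pi> K l0 h j) h"
proof (induction j)
  case 0 then show ?case by (simp add: agree_def)
next
  case (Suc j)
  then show ?case by (auto simp: agree_def flip_def)
qed

lemma extension:
  fixes \<pi> :: "nat \<Rightarrow> ('d::finite \<Rightarrow> nat) \<Rightarrow> ('d \<Rightarrow> nat)"
  assumes h: "\<forall>s\<ge>1. 2 * mseq s < K \<longrightarrow> h \<in> Fpi_s (\<pi> s) s"
  shows "\<exists>g\<in>Fpi \<pi>. agree K g h"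
proof -
  define l0 :: 'd where "l0 = undefined"
  define G where "G = extseq \<pi> K l0 h"
  define g where "g = (\<lambda>l t. G (Suc t) l t)"
  have e3: "agree i g (G i)" for i
    unfolding agree_def
  proof (intro allI impI)
    fix l t assume "t < i"
    then have "agree (Suc t) (G i) (G (Suc t))" unfolding G_def by (intro extseq_mono) simp
    then show "g l t = G i l t" by (simp add: g_def agree_def)
  qed
  have e4: "agree K g h"
    unfolding agree_def
  proof (intro allI impI)
    fix l t assume "t < K"
    then show "g l t = h l t" using extseq_h[of K \<pi> l0 h "Suc t"] by (simp add: g_def G_def agree_def)
  qed
  have "g \<in> Fpi_s (\<pi> s) s" if s: "s \<ge> 1" for s
  proof -
    let ?P = "2 * mseq s"
    have "G (Suc ?P) \<in> Fpi_s (\<pi> s) s"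
    proof (cases "?P < K")
      case True
      have "agree (Suc ?P) h (G (Suc ?P))"
        using agree_mono[OF extseq_h[of K \<pi> l0 h "Suc ?P"], of "Suc ?P"] True agree_sym unfolding G_def
        by simp
      then show ?thesis using C1 h s True by blast
    next
      case big: False
      show ?thesis
      proof (cases "G ?P \<in> Fpi_s (\<pi> s) s")
        case True
        have "\<not> (\<exists>s'\<ge>1. ?P = 2 * mseq s' \<and> G ?P \<notin> Fpi_s (\<pi> s') s')"
        proof
          assume "\<exists>s'\<ge>1. ?P = 2 * mseq s' \<and> G ?P \<notin> Fpi_s (\<pi> s') s'"
          then obtain s' where "s' \<ge> 1" "?P = 2 * mseq s'" "G ?P \<notin> Fpi_s (\<pi> s') s'" by blast
          then have "s' = s" using mseq_inj s by simp
          then show False using True \<open>G ?P \<notin> Fpi_s (\<pi> s') s'\<close> by simp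
        qed
        then have "\<not> (K \<le> ?P \<and> (\<exists>s'\<ge>1. ?P = 2 * mseq s' \<and> G ?P \<notin> Fpi_s (\<pi> s') s'))" by blast
        then have "G (Suc ?P) = G ?P" unfolding G_def extseq.simps by (rule if_not_P)
        then show ?thesis using True by simp
      next
        case nf: False
        have "\<exists>s'\<ge>1. ?P = 2 * mseq s' \<and> G ?P \<notin> Fpi_s (\<pi> s') s'" using s nf by blast
        then have "K \<le> ?P \<and> (\<exists>s'\<ge>1. ?P = 2 * mseq s' \<and> G ?P \<notin> Fpi_s (\<pi> s') s')" using big by simp
        then have "G (Suc ?P) = flip l0 ?P (G ?P)" unfolding G_def extseq.simps by (rule if_P)
        then show ?thesis using C2[of "G ?P" "\<pi> s" s l0] nf by simp
      qed
    qed
    moreover have "agree (Suc ?P) (G (Suc ?P)) g" using e3 agree_sym by blast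
    ultimately show ?thesis using C1 by blast
  qed
  then have "g \<in> Fpi \<pi>" by (simp add: Fpi_def)
  then show ?thesis using e4 by blast
qed



definition togn :: "nat \<Rightarrow> nat" where "togn x = (if even x then Suc x else x - 1)"
definition tog :: "'d \<Rightarrow> ('d \<Rightarrow> nat) \<Rightarrow> ('d \<Rightarrow> nat)" where "tog l m = m(l := togn (m l))"

lemma togn_togn: "togn (togn x) = x"
  unfolding togn_def by (auto elim!: evenE oddE)

lemma togn_div: "togn x div 2 = x div 2"
  unfolding togn_def by (cases "even x") (auto elim!: evenE oddE)

lemma togn_lt: "x < 2 * 2^j \<Longrightarrow> togn x < 2 * 2^j"
proof -
  assume x: "x < 2 * 2^j"
  have "togn x \<le> 2 * (x div 2) + 1" unfolding togn_def by (cases "even x") (auto elim!: evenE oddE)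
  moreover have "x div 2 < 2^j" using x by (simp add: less_mult_imp_div_less)
  ultimately show ?thesis by simp
qed

lemma bit_togn0: "bit (togn x) 0 = (\<not> bit x 0)"
  unfolding togn_def bit_0 by (auto elim!: evenE oddE)

lemma bit_togn_Suc: "bit (togn x) (Suc i) = bit x (Suc i)"
  by (simp add: bit_Suc togn_div)

lemma bit_togn_pos: "0 < i \<Longrightarrow> bit (togn x) i = bit x i"
  using bit_togn_Suc[of x "i - 1"] by simp

lemma tog_apply: "tog l m l' = (if l' = l then togn (m l) else m l')"
  by (simp add: tog_def)

lemma dpt_tog: "(\<lambda>l'. dpt (Suc j) (tog l m l')) = flip l j (\<lambda>l'. dpt (Suc j) (m l'))"
proof (intro ext)
  fix l' t
  show "dpt (Suc j) (tog l m l') t = flip l j (\<lambda>l'. dpt (Suc j) (m l')) l' t"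
  proof (cases "l' = l")
    case False then show ?thesis by (simp add: tog_apply flip_def)
  next
    case True
    show ?thesis
    proof (cases "t < j")
      case tj: True
      show ?thesis using True tj unfolding dpt_def by (simp add: tog_apply flip_def bit_togn_pos)
    next
      case False
      then show ?thesis using True unfolding dpt_def
        by (cases "t = j") (auto simp: tog_apply flip_def bit_togn0)
    qed
  qed
qed

lemma Wk_tog: "Wk (Suc j) n (tog l m) = (if bit (n l) j then -1 else 1) * Wk (Suc j) n m"
  unfolding Wk_def dpt_tog by (rule walshd_flip)

lemma dcube_tog: "g \<in> dcube (Suc j) m \<Longrightarrow> flip l j g \<in> dcube (Suc j) (tog l m)"
  unfolding dcube_iff
proof (intro allI impI)
  fix l' t assume g: "\<forall>l t. t < Suc j \<longrightarrow> g l t = bit (m l) (Suc j - 1 - t)" and t: "t < Suc j"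
  show "flip l j g l' t = bit (tog l m l') (Suc j - 1 - t)"
  proof (cases "l' = l")
    case False then show ?thesis using g t by (simp add: tog_apply flip_def)
  next
    case True
    show ?thesis
    proof (cases "t = j")
      case True
      then show ?thesis using g \<open>l' = l\<close> by (simp add: tog_apply flip_def bit_togn0)
    next
      case False
      show ?thesis using g t False \<open>l' = l\<close> by (simp add: tog_apply flip_def bit_togn_pos)
    qed
  qed
qed

lemma inv_sum_zero:
  assumes "finite S" "\<And>x. x \<in> S \<Longrightarrow> \<iota> x \<in> S" "\<And>x. x \<in> S \<Longrightarrow> \<iota> (\<iota> x) = x"
    "\<And>x. x \<in> S \<Longrightarrow> f (\<iota> x) = - f x"
  shows "sum f S = (0::real)"
proof -
  have "inj_on \<iota> S" by (metis assms(3) inj_onI)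
  moreover have "\<iota> ` S = S" using assms(2,3) by (metis image_subset_iff subsetI subset_antisym imageI)
  ultimately have b: "bij_betw \<iota> S S" by (simp add: bij_betw_def)
  have "sum f S = sum (\<lambda>x. f (\<iota> x)) S" using sum.reindex_bij_betw[OF b, of f] by simp
  also have "\<dots> = sum (\<lambda>x. - f x) S" using assms(4) by (rule sum.cong[OF refl])
  finally show ?thesis by (simp add: sum_negf)
qed

lemma meet_preserve:
  fixes \<pi> :: "nat \<Rightarrow> ('d::finite \<Rightarrow> nat) \<Rightarrow> ('d \<Rightarrow> nat)"
  assumes "h \<in> dcube (Suc j) m'" "\<forall>s\<ge>1. 2 * mseq s < Suc j \<longrightarrow> h \<in> Fpi_s (\<pi> s) s"
  shows "dcube (Suc j) m' \<inter> Fpi \<pi> \<noteq> {}"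
proof -
  obtain g where "g \<in> Fpi \<pi>" "agree (Suc j) g h" using extension[OF assms(2)] by blast
  then have "g \<in> dcube (Suc j) m'" using assms(1) dcube_agree agree_sym by blast
  then show ?thesis using \<open>g \<in> Fpi \<pi>\<close> by blast
qed

lemma Fpi_memb: "g \<in> Fpi \<pi> \<Longrightarrow> s \<ge> 1 \<Longrightarrow> g \<in> Fpi_s (\<pi> s) s"
  by (simp add: Fpi_def)

lemma child_sum_zero:
  fixes \<pi> :: "nat \<Rightarrow> ('d::finite \<Rightarrow> nat) \<Rightarrow> ('d \<Rightarrow> nat)" and n :: "'d \<Rightarrow> nat"
  assumes l1: "bit (n l1) j"
   and l2: "\<forall>s\<ge>1. j = 2 * mseq s \<longrightarrow> (\<exists>l2. \<not> bit (n l2) j)"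
  shows "(\<Sum>m\<in>{m\<in>{x \<in> dbox (Suc j). (\<lambda>l. x l div 2) = q}. dcube (Suc j) m \<inter> Fpi \<pi> \<noteq> {}}. Wk (Suc j) n m) = 0"
    (is "sum _ ?C = 0")
proof -
  have fin: "finite ?C" by (rule finite_subset[OF _ finite_dbox]) auto
  have togC: "tog l m \<in> dbox (Suc j) \<and> (\<lambda>x. tog l m x div 2) = q" if "m \<in> ?C" for m l
    using that by (auto simp: dbox_def tog_apply togn_lt togn_div)
  have togtog: "tog l (tog l m) = m" for l m by (auto simp: tog_apply togn_togn)
  show ?thesis
  proof (cases "\<exists>s\<ge>1. j = 2 * mseq s")
    case False
    show ?thesis
    proof (rule inv_sum_zero[OF fin, of "tog l1"])
      fix m assume m: "m \<in> ?C"
      then obtain g where g: "g \<in> dcube (Suc j) m" "g \<in> Fpi \<pi>" by blast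
      have "flip l1 j g \<in> dcube (Suc j) (tog l1 m)" using g(1) by (rule dcube_tog)
      moreover have "\<forall>s\<ge>1. 2 * mseq s < Suc j \<longrightarrow> flip l1 j g \<in> Fpi_s (\<pi> s) s"
      proof (intro allI impI)
        fix s assume s: "s \<ge> 1" "2 * mseq s < Suc j"
        then have "2 * mseq s < j" using False by (metis less_Suc_eq)
        then have "agree (Suc (2 * mseq s)) g (flip l1 j g)"
          using agree_flip[of "Suc (2 * mseq s)" j l1 g] agree_sym by simp
        then show "flip l1 j g \<in> Fpi_s (\<pi> s) s" using C1 Fpi_memb[OF g(2) s(1)] by blast
      qed
      ultimately have "dcube (Suc j) (tog l1 m) \<inter> Fpi \<pi> \<noteq> {}" by (rule meet_preserve)
      then show "tog l1 m \<in> ?C" using togC[OF m] by simp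
      show "tog l1 (tog l1 m) = m" by (rule togtog)
      show "Wk (Suc j) n (tog l1 m) = - Wk (Suc j) n m" using l1 by (simp add: Wk_tog)
    qed
  next
    case True
    then obtain s0 where s0: "s0 \<ge> 1" "j = 2 * mseq s0" by blast
    then obtain l2 where nl2: "\<not> bit (n l2) j" using l2 by blast
    then have ne: "l1 \<noteq> l2" using l1 by auto
    show ?thesis
    proof (rule inv_sum_zero[OF fin, of "\<lambda>m. tog l1 (tog l2 m)"])
      fix m assume m: "m \<in> ?C"
      then obtain g where g: "g \<in> dcube (Suc j) m" "g \<in> Fpi \<pi>" by blast
      have "flip l1 j (flip l2 j g) \<in> dcube (Suc j) (tog l1 (tog l2 m))" using g(1) by (intro dcube_tog)
      moreover have "\<forall>s\<ge>1. 2 * mseq s < Suc j \<longrightarrow> flip l1 j (flip l2 j g) \<in> Fpi_s (\<pi> s) s"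
      proof (intro allI impI)
        fix s assume s: "s \<ge> 1" "2 * mseq s < Suc j"
        have gs: "g \<in> Fpi_s (\<pi> s) s" using Fpi_memb[OF g(2) s(1)] .
        show "flip l1 j (flip l2 j g) \<in> Fpi_s (\<pi> s) s"
        proof (cases "2 * mseq s = j")
          case True
          have "flip l2 (2 * mseq s) g \<notin> Fpi_s (\<pi> s) s" using C2[of g "\<pi> s" s l2] gs by simp
          then have "flip l1 (2 * mseq s) (flip l2 (2 * mseq s) g) \<in> Fpi_s (\<pi> s) s"
            using C2[of "flip l2 (2 * mseq s) g" "\<pi> s" s l1] by simp
          then show ?thesis using True by simp
        next
          case False
          then have lt: "Suc (2 * mseq s) \<le> j" using s by simp
          have "agree (Suc (2 * mseq s)) (flip l1 j (flip l2 j g)) (flip l2 j g)"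
            using agree_flip[OF lt] .
          moreover have "agree (Suc (2 * mseq s)) (flip l2 j g) g"
            using agree_flip[OF lt] .
          ultimately have "agree (Suc (2 * mseq s)) g (flip l1 j (flip l2 j g))"
            using agree_trans agree_sym by blast
          then show ?thesis using C1 gs by blast
        qed
      qed
      ultimately have "dcube (Suc j) (tog l1 (tog l2 m)) \<inter> Fpi \<pi> \<noteq> {}" by (rule meet_preserve)
      moreover have "tog l1 (tog l2 m) \<in> dbox (Suc j)" "(\<lambda>x. tog l1 (tog l2 m) x div 2) = q"
        using m by (auto simp: dbox_def tog_apply togn_lt togn_div)
      ultimately show "tog l1 (tog l2 m) \<in> ?C" by simp
      show "tog l1 (tog l2 (tog l1 (tog l2 m))) = m" using ne by (auto simp: tog_apply togn_togn)
      show "Wk (Suc j) n (tog l1 (tog l2 m)) = - Wk (Suc j) n m" using l1 nl2 by (simp add: Wk_tog)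
    qed
  qed
qed



lemma Fpi_nonempty: "Fpi \<pi> \<noteq> {}"
  using extension[of 0 _ \<pi>] by auto

lemma fcoef_0:
  fixes \<pi> :: "nat \<Rightarrow> ('d::finite \<Rightarrow> nat) \<Rightarrow> ('d \<Rightarrow> nat)"
  shows "fcoef (tauE (Fpi \<pi>)) (\<lambda>_. 0) = 1"
proof -
  have L: "(LEAST k. \<forall>l::'d. (0::nat) < 2 ^ k) = 0" by (rule Least_eq_0) simp
  have D: "(dbox 0 :: ('d \<Rightarrow> nat) set) = {\<lambda>_. 0}" by (auto simp: dbox_def)
  have W: "Wk 0 (\<lambda>_::'d. 0) (\<lambda>_. 0) = 1" by (simp add: Wk_def walshd_def walsh_def)
  show ?thesis unfolding fcoef_def Let_def L D using W Fpi_nonempty[of \<pi>] by simp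
qed

lemma fcoef_n:
  fixes \<pi> :: "nat \<Rightarrow> ('d::finite \<Rightarrow> nat) \<Rightarrow> ('d \<Rightarrow> nat)" and n :: "'d \<Rightarrow> nat"
  assumes n0: "n \<noteq> (\<lambda>_. 0)" and nb: "\<forall>s\<ge>1. n \<notin> block (2 * mseq s)"
  shows "fcoef (tauE (Fpi \<pi>)) n = 0"
proof -
  define E where "E = Fpi \<pi>"
  define k where "k = (LEAST k. \<forall>l. n l < 2^k)"
  have ex: "\<exists>k. \<forall>l. n l < 2^k"
  proof (intro exI allI)
    fix l
    have "n l \<le> sum n UNIV" by (rule member_le_sum) auto
    then have "(2::nat) ^ n l \<le> 2 ^ sum n UNIV" by simp
    moreover have "n l < 2 ^ n l" by simp
    ultimately show "n l < 2 ^ sum n UNIV" by linarith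
  qed
  have hk: "\<forall>l. n l < 2^k" unfolding k_def by (rule LeastI_ex[OF ex])
  have "k \<noteq> 0"
  proof
    assume "k = 0"
    then have "n = (\<lambda>_. 0)" using hk by auto
    then show False using n0 by simp
  qed
  then obtain j where kj: "k = Suc j" by (cases k) auto
  have "\<not> (\<forall>l. n l < 2^j)" using not_less_Least[of j "\<lambda>k. \<forall>l. n l < 2^k"] k_def kj by simp
  then obtain l1 where l1: "2^j \<le> n l1" by (auto simp: not_less)
  have "n l1 div 2^j < 2" using hk kj by (simp add: less_mult_imp_div_less mult.commute)
  moreover have "0 < n l1 div 2^j" using l1 by (simp add: div_greater_zero_iff)
  ultimately have "n l1 div 2^j = 1" by simp
  then have bl1: "bit (n l1) j" by (simp add: bit_iff_odd)
  have bl2: "\<forall>s\<ge>1. j = 2 * mseq s \<longrightarrow> (\<exists>l2. \<not> bit (n l2) j)"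
  proof (intro allI impI)
    fix s assume s: "s \<ge> 1" "j = 2 * mseq s"
    then have "n \<notin> block j" using nb by simp
    then obtain l2 where "\<not> (2^j \<le> n l2 \<and> n l2 < 2^(j+1))" by (auto simp: block_def)
    then have "n l2 < 2^j" using hk kj by auto
    then show "\<exists>l2. \<not> bit (n l2) j" using bit_big by blast
  qed
  have fin1: "finite (dbox (Suc j) :: ('d \<Rightarrow> nat) set)" by (rule finite_dbox)
  have fin0: "finite (dbox j :: ('d \<Rightarrow> nat) set)" by (rule finite_dbox)
  have img: "(\<lambda>m. \<lambda>l. m l div 2) ` (dbox (Suc j) :: ('d \<Rightarrow> nat) set) \<subseteq> dbox j"
  proof (rule image_subsetI)
    fix x :: "'d \<Rightarrow> nat" assume x: "x \<in> dbox (Suc j)"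
    { fix l
      have "x l < 2 ^ j * 2" using x by (simp add: dbox_def mult.commute)
      then have "x l div 2 < 2 ^ j" by (rule less_mult_imp_div_less) }
    then show "(\<lambda>l. x l div 2) \<in> dbox j" by (simp add: dbox_def)
  qed
  let ?f = "\<lambda>m. Wk (Suc j) n m * tauE E (Suc j) m"
  have "fcoef (tauE E) n = sum ?f (dbox (Suc j))"
    unfolding fcoef_def Let_def k_def[symmetric] kj ..
  also have "\<dots> = (\<Sum>q\<in>dbox j. sum ?f {x \<in> dbox (Suc j). (\<lambda>l. x l div 2) = q})"
    by (rule sum.group[OF fin1 fin0 img, symmetric])
  also have "\<dots> = (\<Sum>q\<in>(dbox j :: ('d \<Rightarrow> nat) set). 0)"
  proof (rule sum.cong[OF refl])
    fix q :: "'d \<Rightarrow> nat" assume q: "q \<in> dbox j"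
    let ?S = "{x \<in> dbox (Suc j). (\<lambda>l. x l div 2) = q}"
    define c where "c = tauE E j q / real (card {\<sigma>::'d \<Rightarrow> bool.
                dcube (Suc j) (\<lambda>l. 2 * q l + of_bool (\<sigma> l)) \<inter> E \<noteq> {}})"
    have "sum ?f ?S = (\<Sum>m\<in>?S. if dcube (Suc j) m \<inter> E \<noteq> {} then c * Wk (Suc j) n m else 0)"
    proof (rule sum.cong[OF refl])
      fix m :: "'d \<Rightarrow> nat" assume "m \<in> ?S"
      then have mq: "\<And>l. m l div 2 = q l" by auto
      have "tauE E (Suc j) m = (if dcube (Suc j) m \<inter> E = {} then 0 else c)"
        by (simp only: tauE.simps mq c_def)
      then show "?f m = (if dcube (Suc j) m \<inter> E \<noteq> {} then c * Wk (Suc j) n m else 0)" by simp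
    qed
    also have "\<dots> = (\<Sum>m\<in>{m\<in>?S. dcube (Suc j) m \<inter> E \<noteq> {}}. c * Wk (Suc j) n m)"
      by (rule sum.inter_filter[symmetric]) (rule finite_subset[OF _ fin1], auto)
    also have "\<dots> = c * (\<Sum>m\<in>{m\<in>?S. dcube (Suc j) m \<inter> E \<noteq> {}}. Wk (Suc j) n m)"
      by (simp add: sum_distrib_left)
    also have "\<dots> = 0" unfolding E_def using child_sum_zero[OF bl1 bl2, of q \<pi>] by simp
    finally show "sum ?f ?S = 0" .
  qed
  finally show ?thesis unfolding E_def by simp
qed


lemma Fset_eq: "Fset = Fpi (\<lambda>_. id)"
  unfolding Fset_def Fpi_def F_s_def Fpi_s_def by simp

theorem lemma3:
  assumes d2: "card (UNIV :: 'd set) \<ge> 2"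
  shows "fcoef (tauE (Fset :: ('d::finite \<Rightarrow> nat \<Rightarrow> bool) set)) (\<lambda>_. 0) = 1
       \<and> (\<forall>n :: 'd \<Rightarrow> nat. n \<noteq> (\<lambda>_. 0) \<and> (\<forall>s\<ge>1. n \<notin> block (2 * mseq s))
             \<longrightarrow> fcoef (tauE (Fset :: ('d::finite \<Rightarrow> nat \<Rightarrow> bool) set)) n = 0)
       \<and> (\<forall>\<pi> :: nat \<Rightarrow> ('d \<Rightarrow> nat) \<Rightarrow> ('d \<Rightarrow> nat).
            (\<forall>s\<ge>1. bij_betw (\<pi> s) (dbox (mseq s)) (dbox (mseq s))) \<longrightarrow>
              fcoef (tauE (Fpi \<pi>)) (\<lambda>_. 0) = 1
            \<and> (\<forall>n :: 'd \<Rightarrow> nat. n \<noteq> (\<lambda>_. 0) \<and> (\<forall>s\<ge>1. n \<notin> block (2 * mseq s))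
                 \<longrightarrow> fcoef (tauE (Fpi \<pi>)) n = 0))"
  unfolding Fset_eq using fcoef_0 fcoef_n by blast

end
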